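(* Let $\alpha=[a_0;a_1,a_2,\dots]$ be irrational with convergents $p_k/q_k$, and for integers $k\ge1$, $0\le M<q_k$ let \[ B_{k,M}(x)= \log \frac{P_M (\alpha, (-1)^k x/q_k)}{P_M (p_k/q_k, (-1)^k x/q_k)} - \sum_{n=1}^M \sin (\pi n \| q_k \alpha \| /q_k ) \cot \left( \pi \frac{n (-1)^k p_k+x}{q_k} \right) . \] (i) Let $k \ge 1$ and $0 \le M < q_k$ be integers, and assume that $q_k \| q_k \alpha \| \le 1-c_k$ and $-1<x \le 1-\frac{q_k \| q_k \alpha \|}{1-c_k}$ for some $c_k$ with $10/q_k^2 \le c_k<1$. Then \[ -C \frac{\log (4/c_k)}{(1-|x|)^2 a_{k+1}^2} \le B_{k,M}(x) \le C \frac{1}{a_{k+1}^2 q_k} \] with a universal constant $C>0$. (ii) Let $N=\sum_{k=0}^{K-1} b_k q_k$ be the Ostrowski expansion of a non-negative integer. For any $1 \le k \le K-1$, any $0 \le M <q_k$ and any $0 \le b \le b_k-1$, \[ B_{k,M}(b q_k \| q_k \alpha \| + \varepsilon_k (N)) \le C \frac{1}{a_{k+1}^2q_k} \] with a universal constant $C>0$.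
   Context: $P_N(\beta,x)=\prod_{n=1}^N|2\sin(\pi(n\beta+x))|$. $p_k/q_k=[a_0;a_1,\dots,a_k]$; $\|y\|$ is distance to nearest integer. Ostrowski expansion: the unique representation $N=\sum_{k=0}^{K-1}b_kq_k$ with integers $0\le b_0<a_1$, $0\le b_k\le a_{k+1}$, and $b_{k-1}=0$ whenever $b_k=a_{k+1}$. $\varepsilon_k(N):=q_k\sum_{\ell=k+1}^{K-1}(-1)^{k+\ell}b_\ell\|q_\ell\alpha\|$. *)

theory Defs
  imports Complex_Main
begin

fun cf_rem :: "real \<Rightarrow> nat \<Rightarrow> real" where
  "cf_rem \<alpha> 0 = \<alpha>"
| "cf_rem \<alpha> (Suc n) = 1 / frac (cf_rem \<alpha> n)"

definition cf_a :: "real \<Rightarrow> nat \<Rightarrow> int" where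
  "cf_a \<alpha> n = \<lfloor>cf_rem \<alpha> n\<rfloor>"

fun cf_p :: "real \<Rightarrow> nat \<Rightarrow> int" where
  "cf_p \<alpha> 0 = cf_a \<alpha> 0"
| "cf_p \<alpha> (Suc 0) = cf_a \<alpha> 1 * cf_a \<alpha> 0 + 1"
| "cf_p \<alpha> (Suc (Suc n)) = cf_a \<alpha> (Suc (Suc n)) * cf_p \<alpha> (Suc n) + cf_p \<alpha> n"

fun cf_q :: "real \<Rightarrow> nat \<Rightarrow> int" where
  "cf_q \<alpha> 0 = 1"
| "cf_q \<alpha> (Suc 0) = cf_a \<alpha> 1"
| "cf_q \<alpha> (Suc (Suc n)) = cf_a \<alpha> (Suc (Suc n)) * cf_q \<alpha> (Suc n) + cf_q \<alpha> n"

definition dist_int :: "real \<Rightarrow> real" where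
  "dist_int y = \<bar>y - of_int (round y)\<bar>"

definition sine_prod :: "nat \<Rightarrow> real \<Rightarrow> real \<Rightarrow> real" where
  "sine_prod N \<beta> x = (\<Prod>n=1..N. \<bar>2 * sin (pi * (real n * \<beta> + x))\<bar>)"

definition B_fun :: "real \<Rightarrow> nat \<Rightarrow> nat \<Rightarrow> real \<Rightarrow> real" where
  "B_fun \<alpha> k M x =
     (let p = real_of_int (cf_p \<alpha> k); q = real_of_int (cf_q \<alpha> k);
          s = (-1) ^ k * x / q
      in ln (sine_prod M \<alpha> s / sine_prod M (p / q) s)
         - (\<Sum>n=1..M. sin (pi * real n * dist_int (q * \<alpha>) / q)
                        * cot (pi * (real n * (-1) ^ k * p + x) / q)))"

definition ostrowski_expansion :: "real \<Rightarrow> nat \<Rightarrow> nat \<Rightarrow> (nat \<Rightarrow> nat) \<Rightarrow> bool" where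
  "ostrowski_expansion \<alpha> N K b \<longleftrightarrow>
     int N = (\<Sum>k<K. int (b k) * cf_q \<alpha> k)
     \<and> (0 < K \<longrightarrow> int (b 0) < cf_a \<alpha> 1)
     \<and> (\<forall>k<K. int (b k) \<le> cf_a \<alpha> (Suc k))
     \<and> (\<forall>k<K. 0 < k \<longrightarrow> int (b k) = cf_a \<alpha> (Suc k) \<longrightarrow> b (k - 1) = 0)"

definition ostrowski_eps :: "real \<Rightarrow> nat \<Rightarrow> (nat \<Rightarrow> nat) \<Rightarrow> nat \<Rightarrow> real" where
  "ostrowski_eps \<alpha> K b k = real_of_int (cf_q \<alpha> k) *
     (\<Sum>l\<in>{k+1..<K}. (-1) ^ (k + l) * real (b l) * dist_int (real_of_int (cf_q \<alpha> l) * \<alpha>))"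

end

theory Submission
  imports Defs
begin


lemma cf_rem_irrat: assumes "\<alpha> \<notin> \<rat>" shows "cf_rem \<alpha> n \<notin> \<rat>"
proof (induction n)
  case 0 then show ?case using assms by simp
next
  case (Suc n)
  have "frac (cf_rem \<alpha> n) \<notin> \<rat>"
  proof
    assume "frac (cf_rem \<alpha> n) \<in> \<rat>"
    then have "frac (cf_rem \<alpha> n) + of_int \<lfloor>cf_rem \<alpha> n\<rfloor> \<in> \<rat>" by (intro Rats_add) auto
    then show False using Suc by (simp add: frac_def)
  qed
  then have "inverse (frac (cf_rem \<alpha> n)) \<notin> \<rat>" using Rats_inverse_iff by blast
  then show ?case by (simp add: divide_inverse del: Rats_inverse_iff)
qed
lemma cf_frac_pos: assumes "\<alpha> \<notin> \<rat>" shows "0 < frac (cf_rem \<alpha> n)"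
proof -
  have "cf_rem \<alpha> n \<notin> \<int>" using cf_rem_irrat[OF assms, of n] Ints_subset_Rats by blast
  then show ?thesis by simp
qed

lemma cf_a_ge1: assumes "\<alpha> \<notin> \<rat>" shows "1 \<le> cf_a \<alpha> (Suc n)"
proof -
  have f: "0 < frac (cf_rem \<alpha> n)" "frac (cf_rem \<alpha> n) < 1" using cf_frac_pos[OF assms] frac_lt_1 by auto
  have "1 < 1 / frac (cf_rem \<alpha> n)" using f by (simp add: field_simps)
  then have "1 < cf_rem \<alpha> (Suc n)" by (simp only: cf_rem.simps)
  then show ?thesis unfolding cf_a_def by linarith
qed

lemma cf_q_ge1: assumes "\<alpha> \<notin> \<rat>" shows "1 \<le> cf_q \<alpha> n \<and> 1 \<le> cf_q \<alpha> (Suc n)"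
proof (induction n)
  case 0 then show ?case using cf_a_ge1[OF assms, of 0] by simp
next
  case (Suc n)
  have a: "1 \<le> cf_a \<alpha> (Suc (Suc n))" using cf_a_ge1[OF assms] by blast
  have "cf_a \<alpha> (Suc (Suc n)) * cf_q \<alpha> (Suc n) \<ge> 1 * 1"
    using Suc a by (intro mult_mono) auto
  then show ?case using Suc by simp
qed
definition cf_e :: "real \<Rightarrow> nat \<Rightarrow> real" where
  "cf_e \<alpha> n = (-1)^n * (real_of_int (cf_q \<alpha> n) * \<alpha> - real_of_int (cf_p \<alpha> n))"

lemma cf_e_rec: "cf_e \<alpha> (Suc (Suc n)) = cf_e \<alpha> n - cf_a \<alpha> (Suc (Suc n)) * cf_e \<alpha> (Suc n)"
  by (simp add: cf_e_def algebra_simps)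

lemma cf_e0: "cf_e \<alpha> 0 = frac \<alpha>"
  by (simp add: cf_e_def cf_a_def frac_def)

lemma cf_e1: "cf_e \<alpha> (Suc 0) = 1 - cf_a \<alpha> 1 * cf_e \<alpha> 0"
  by (simp add: cf_e_def algebra_simps)



lemma alg1: "(E2::real) = E0 - A*E1 \<Longrightarrow> E0 = E1 * R \<Longrightarrow> E2 = E1 * (R - A)"
  by (simp add: algebra_simps)

lemma alg2: "(f::real) > 0 \<Longrightarrow> E1 = E0 * f \<Longrightarrow> R = 1 / f \<Longrightarrow> E0 = E1 * R"
  by (simp add: field_simps)

lemma alg4: assumes "(f::real) > 0" "E0 = f" "E1 = 1 - a*E0" shows "E1 = E0 * (1/f - a)"
proof -
  have "f * (1/f - a) = 1 - a * f" using assms(1) by (simp add: field_simps)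
  then show ?thesis using assms by simp
qed

lemma cf_e_step: assumes "\<alpha> \<notin> \<rat>"
  shows "cf_e \<alpha> (Suc n) = cf_e \<alpha> n * frac (cf_rem \<alpha> (Suc n)) \<and> cf_e \<alpha> n = cf_e \<alpha> (Suc n) * cf_rem \<alpha> (Suc (Suc n))"
proof (induction n)
  case 0
  have f0: "frac \<alpha> > 0" using cf_frac_pos[OF assms, of 0] by simp
  have r1: "cf_rem \<alpha> (Suc 0) = 1 / frac \<alpha>" by simp
  have "frac (cf_rem \<alpha> (Suc 0)) = cf_rem \<alpha> (Suc 0) - cf_a \<alpha> 1" by (simp only: frac_def cf_a_def One_nat_def)
  then have fr: "frac (cf_rem \<alpha> (Suc 0)) = 1 / frac \<alpha> - cf_a \<alpha> 1" using r1 by simp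
  have A: "cf_e \<alpha> (Suc 0) = cf_e \<alpha> 0 * frac (cf_rem \<alpha> (Suc 0))"
    unfolding fr by (rule alg4[OF f0 cf_e0 cf_e1])
  have f1: "frac (cf_rem \<alpha> (Suc 0)) > 0" using cf_frac_pos[OF assms] by blast
  have r2: "cf_rem \<alpha> (Suc (Suc 0)) = 1 / frac (cf_rem \<alpha> (Suc 0))" by (simp only: cf_rem.simps)
  show ?case using A alg2[OF f1 A r2] by blast
next
  case (Suc n)
  have fS: "frac (cf_rem \<alpha> (Suc (Suc n))) > 0" using cf_frac_pos[OF assms] by blast
  have "cf_e \<alpha> (Suc (Suc n)) = cf_e \<alpha> (Suc n) * (cf_rem \<alpha> (Suc (Suc n)) - cf_a \<alpha> (Suc (Suc n)))"
    using alg1[OF cf_e_rec[of \<alpha> n]] Suc by blast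
  then have A: "cf_e \<alpha> (Suc (Suc n)) = cf_e \<alpha> (Suc n) * frac (cf_rem \<alpha> (Suc (Suc n)))"
    by (simp only: frac_def cf_a_def)
  have r: "cf_rem \<alpha> (Suc (Suc (Suc n))) = 1 / frac (cf_rem \<alpha> (Suc (Suc n)))" by (simp only: cf_rem.simps)
  show ?case using A alg2[OF fS A r] by blast
qed

lemma cf_e_pos: assumes "\<alpha> \<notin> \<rat>" shows "0 < cf_e \<alpha> n"
proof (induction n)
  case 0
  then show ?case using cf_frac_pos[OF assms, of 0] by (simp add: cf_e0)
next
  case (Suc n)
  have "cf_e \<alpha> (Suc n) = cf_e \<alpha> n * frac (cf_rem \<alpha> (Suc n))" using cf_e_step[OF assms, of n] by blast
  moreover have "0 < frac (cf_rem \<alpha> (Suc n))" using cf_frac_pos[OF assms] by blast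
  ultimately show ?case using Suc by (metis mult_pos_pos)
qed

lemma cf_e_decr: assumes "\<alpha> \<notin> \<rat>" shows "cf_e \<alpha> (Suc n) < cf_e \<alpha> n"
proof -
  have "cf_e \<alpha> (Suc n) = cf_e \<alpha> n * frac (cf_rem \<alpha> (Suc n))" using cf_e_step[OF assms, of n] by blast
  moreover have "frac (cf_rem \<alpha> (Suc n)) < 1" by (rule frac_lt_1)
  ultimately show ?thesis using cf_e_pos[OF assms, of n] mult_strict_left_mono[of "frac (cf_rem \<alpha> (Suc n))" 1 "cf_e \<alpha> n"] by simp
qed

lemma cf_e_rec2:
  shows "cf_e \<alpha> n = cf_a \<alpha> (Suc (Suc n)) * cf_e \<alpha> (Suc n) + cf_e \<alpha> (Suc (Suc n))"
  using cf_e_rec[of \<alpha> n] by simp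

lemma alg3: assumes h1: "(Q2::real) = A * Q1 + Q0" and h2: "E2 = E0 - A * E1" and h3: "Q1 * E0 + Q0 * E1 = 1"
  shows "Q2 * E1 + Q1 * E2 = 1"
proof -
  have "Q2 * E1 + Q1 * E2 = Q1 * E0 + Q0 * E1" unfolding h1 h2 by (simp add: algebra_simps)
  then show ?thesis using h3 by simp
qed



lemma cf_det: "cf_q \<alpha> (Suc n) * cf_e \<alpha> n + cf_q \<alpha> n * cf_e \<alpha> (Suc n) = 1"
proof (induction n)
  case 0 then show ?case by (simp add: cf_e_def algebra_simps)
next
  case (Suc n)
  have q: "real_of_int (cf_q \<alpha> (Suc (Suc n))) = cf_a \<alpha> (Suc (Suc n)) * real_of_int (cf_q \<alpha> (Suc n)) + real_of_int (cf_q \<alpha> n)"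
    by (simp only: cf_q.simps of_int_add of_int_mult)
  show ?case by (rule alg3[OF q cf_e_rec Suc])
qed

lemma cf_pq_det: "cf_p \<alpha> (Suc n) * cf_q \<alpha> n - cf_p \<alpha> n * cf_q \<alpha> (Suc n) = (-1)^n"
proof (induction n)
  case 0 then show ?case by simp
next
  case (Suc n)
  show ?case using Suc by (simp add: algebra_simps)
qed


lemma cf_q_step: assumes "\<alpha> \<notin> \<rat>" shows "cf_a \<alpha> (Suc n) * cf_q \<alpha> n \<le> cf_q \<alpha> (Suc n)"
proof (cases n)
  case 0 then show ?thesis by simp
next
  case (Suc m)
  have "0 \<le> cf_q \<alpha> m" using cf_q_ge1[OF assms, of m] by simp
  then show ?thesis unfolding Suc by (simp only: cf_q.simps)
qed

lemma cf_q_ge2: assumes "\<alpha> \<notin> \<rat>" "1 \<le> k" shows "2 \<le> cf_q \<alpha> (Suc k)"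
proof -
  obtain m where k: "k = Suc m" using assms(2) by (cases k) auto
  have "1 \<le> cf_q \<alpha> m" "1 \<le> cf_q \<alpha> (Suc m)" using cf_q_ge1[OF assms(1), of m] by auto
  moreover have "1 \<le> cf_a \<alpha> (Suc (Suc m))" using cf_a_ge1[OF assms(1)] by blast
  ultimately have "1 * 1 \<le> cf_a \<alpha> (Suc (Suc m)) * cf_q \<alpha> (Suc m)" by (intro mult_mono) auto
  then show ?thesis unfolding k using \<open>1 \<le> cf_q \<alpha> m\<close> by (simp only: cf_q.simps)
qed

lemma cf_qe_lt1: assumes "\<alpha> \<notin> \<rat>" shows "cf_q \<alpha> (Suc k) * cf_e \<alpha> k < 1"
proof -
  have "0 < cf_q \<alpha> k * cf_e \<alpha> (Suc k)" using cf_q_ge1[OF assms, of k] cf_e_pos[OF assms, of "Suc k"] by simp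
  then show ?thesis using cf_det[of \<alpha> k] by linarith
qed

lemma cf_aqe_lt1: assumes "\<alpha> \<notin> \<rat>" shows "cf_a \<alpha> (Suc k) * cf_q \<alpha> k * cf_e \<alpha> k < 1"
proof -
  have "real_of_int (cf_a \<alpha> (Suc k) * cf_q \<alpha> k) \<le> cf_q \<alpha> (Suc k)" using cf_q_step[OF assms, of k] by linarith
  then have "real_of_int (cf_a \<alpha> (Suc k) * cf_q \<alpha> k) * cf_e \<alpha> k \<le> cf_q \<alpha> (Suc k) * cf_e \<alpha> k"
    using cf_e_pos[OF assms, of k] by (intro mult_right_mono) auto
  then show ?thesis using cf_qe_lt1[OF assms, of k] by simp
qed

lemma cf_qe_prev_lt1: assumes "\<alpha> \<notin> \<rat>" shows "cf_q \<alpha> (Suc k) * cf_e \<alpha> k < 1"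
  using cf_qe_lt1[OF assms] .

lemma cf_e_half: assumes "\<alpha> \<notin> \<rat>" "1 \<le> k" shows "cf_e \<alpha> k < 1/2"
proof -
  have "2 * cf_e \<alpha> k \<le> cf_q \<alpha> (Suc k) * cf_e \<alpha> k"
    using cf_q_ge2[OF assms] cf_e_pos[OF assms(1), of k] by (intro mult_right_mono) auto
  then show ?thesis using cf_qe_lt1[OF assms(1), of k] by linarith
qed

lemma cf_qalpha: "real_of_int (cf_q \<alpha> k) * \<alpha> = cf_p \<alpha> k + (-1)^k * cf_e \<alpha> k"
proof -
  have "((-1::real)^k) * (-1)^k = 1" by (simp add: power_mult_distrib[symmetric])
  then show ?thesis unfolding cf_e_def by (simp add: algebra_simps)
qed

lemma cf_dist: assumes "\<alpha> \<notin> \<rat>" "1 \<le> k" shows "dist_int (real_of_int (cf_q \<alpha> k) * \<alpha>) = cf_e \<alpha> k"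
proof -
  have ab: "\<bar>(-1::real)^k * cf_e \<alpha> k\<bar> = cf_e \<alpha> k" using cf_e_pos[OF assms(1), of k] by (simp add: abs_mult)
  have "round (real_of_int (cf_q \<alpha> k) * \<alpha>) = cf_p \<alpha> k"
    by (rule round_unique') (simp add: cf_qalpha ab, use cf_e_half[OF assms] in linarith)
  then show ?thesis unfolding dist_int_def by (simp add: cf_qalpha ab)
qed

lemma cf_coprime_dvd: assumes "q = cf_q \<alpha> k" "p = cf_p \<alpha> k" "q dvd (m * p)" shows "q dvd m"
proof (cases k)
  case 0 then show ?thesis using assms by simp
next
  case (Suc j)
  have d: "p * cf_q \<alpha> j - cf_p \<alpha> j * q = (-1)^j" using cf_pq_det[of \<alpha> j] assms Suc by simp
  have "q dvd m * p * cf_q \<alpha> j - m * cf_p \<alpha> j * q" using assms(3) by (simp add: dvd_mult2)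
  moreover have "m * p * cf_q \<alpha> j - m * cf_p \<alpha> j * q = m * (-1)^j" using d by (metis mult.assoc right_diff_distrib)
  ultimately have "q dvd m * (-1)^j" by simp
  then show ?thesis by (simp add: minus_one_power_iff split: if_splits)
qed



lemma t_cos_le_sin: assumes "0 \<le> t" "t \<le> pi" shows "t * cos t \<le> sin t"
proof -
  have "(\<lambda>s. sin s - s * cos s) 0 \<le> (\<lambda>s. sin s - s * cos s) t"
  proof (rule DERIV_nonneg_imp_increasing_open[OF assms(1)])
    fix x assume x: "0 < x" "x < t"
    have "((\<lambda>s. sin s - s * cos s) has_real_derivative (x * sin x)) (at x)"
      by (auto intro!: derivative_eq_intros simp: algebra_simps)
    moreover have "0 \<le> x * sin x" using x assms by (intro mult_nonneg_nonneg sin_ge_zero) auto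
    ultimately show "\<exists>y. ((\<lambda>s. sin s - s * cos s) has_real_derivative y) (at x) \<and> 0 \<le> y" by blast
  next
    show "continuous_on {0..t} (\<lambda>s. sin s - s * cos s)" by (intro continuous_intros)
  qed
  then show ?thesis by simp
qed

lemma sinc_mono: assumes "0 < b" "b \<le> a" "a \<le> pi" shows "b * sin a \<le> a * sin b"
proof -
  have "(\<lambda>s. sin s / s) a \<le> (\<lambda>s. sin s / s) b"
  proof (rule DERIV_nonpos_imp_decreasing_open[OF assms(2)])
    fix x assume x: "b < x" "x < a"
    have "((\<lambda>s. sin s / s) has_real_derivative ((cos x * x - sin x) / x^2)) (at x)"
      using x assms by (auto intro!: derivative_eq_intros simp: power2_eq_square)
    moreover have "(cos x * x - sin x) / x^2 \<le> 0"
      using t_cos_le_sin[of x] x assms by (intro divide_nonpos_nonneg) (auto simp: algebra_simps)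
    ultimately show "\<exists>y. ((\<lambda>s. sin s / s) has_real_derivative y) (at x) \<and> y \<le> 0" by blast
  next
    show "continuous_on {b..a} (\<lambda>s. sin s / s)" using assms by (intro continuous_intros) auto
  qed
  then show ?thesis using assms by (simp add: field_simps)
qed

lemma one_minus_cos_le: "1 - cos h \<le> (h::real)^2 / 2"
proof -
  have c: "cos h = 1 - 2 * sin (h/2) ^ 2" using cos_double_sin[of "h/2"] by simp
  have "\<bar>sin (h/2)\<bar> \<le> \<bar>h/2\<bar>" by (rule abs_sin_x_le_abs_x)
  then have "sin (h/2) ^ 2 \<le> (h/2)^2" by (metis power2_abs power_mono abs_ge_zero)
  then show ?thesis unfolding c by (simp add: power_divide)
qed

lemma int_pi_shift: fixes j :: int
  shows "\<bar>sin (z + of_int j * pi)\<bar> = \<bar>sin z\<bar> \<and> cot (z + of_int j * pi) = cot z"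
proof -
  have s0: "sin (of_int j * pi) = 0" using sin_zero_iff_int2 by blast
  then have "cos (of_int j * pi)^2 = 1" using sin_cos_squared_add[of "of_int j * pi"] by simp
  then have s: "cos (of_int j * pi) = 1 \<or> cos (of_int j * pi) = -1" using power2_eq_1_iff by blast
  have e1: "sin (z + of_int j * pi) = sin z * cos (of_int j * pi)" by (simp add: sin_add s0)
  have e2: "cos (z + of_int j * pi) = cos z * cos (of_int j * pi)" by (simp add: cos_add s0)
  show ?thesis using s unfolding e1 e2 cot_def by auto
qed

lemma cot_upper: assumes "0 < t" "t < pi" shows "cot t \<le> 1 / t"
proof -
  have "0 < sin t" using assms sin_gt_zero by blast
  then show ?thesis using t_cos_le_sin[of t] assms unfolding cot_def by (simp add: field_simps)
qed

lemma cot_lower: assumes "0 < t" "t < pi" shows "- 1 / (pi - t) \<le> cot t"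
proof -
  have "cot (pi - t) \<le> 1 / (pi - t)" using cot_upper[of "pi - t"] assms by simp
  moreover have "cot (pi - t) = - cot t" unfolding cot_def by simp
  ultimately show ?thesis by simp
qed

lemma cot_sq: assumes "0 < t" "t < pi" shows "(cot t)^2 \<le> 1 / t^2 + 1 / (pi - t)^2"
proof (cases "cot t \<ge> 0")
  case True
  then have "(cot t)^2 \<le> (1/t)^2" using cot_upper[OF assms] by (intro power_mono) auto
  then have "(cot t)^2 \<le> 1/t^2" by (simp add: power_divide)
  moreover have "0 \<le> 1 / (pi - t)^2" by simp
  ultimately show ?thesis by linarith
next
  case False
  then have "(- cot t)^2 \<le> (1/(pi - t))^2" using cot_lower[OF assms] by (intro power_mono) auto
  then have "(cot t)^2 \<le> 1/(pi - t)^2" by (simp add: power_divide)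
  moreover have "0 \<le> 1 / t^2" by simp
  ultimately show ?thesis by linarith
qed


lemma core_basic: assumes "0 < \<phi>" "0 \<le> h" "\<phi> + h < pi"
  shows "0 < sin (\<phi> + h) / sin \<phi>"
    and "sin (\<phi> + h) / sin \<phi> = cos h + sin h * cot \<phi>"
    and "1 - h / (pi - \<phi>) \<le> sin (\<phi> + h) / sin \<phi>"
proof -
  have s1: "0 < sin \<phi>" using assms by (intro sin_gt_zero) auto
  have s2: "0 < sin (\<phi> + h)" using assms by (intro sin_gt_zero) auto
  show "0 < sin (\<phi> + h) / sin \<phi>" using s1 s2 by simp
  show "sin (\<phi> + h) / sin \<phi> = cos h + sin h * cot \<phi>"
    using s1 unfolding cot_def by (simp add: sin_add field_simps)
  have "(pi - \<phi> - h) * sin (pi - \<phi>) \<le> (pi - \<phi>) * sin (pi - \<phi> - h)"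
    using assms by (intro sinc_mono) auto
  moreover have "sin (pi - \<phi> - h) = sin (\<phi> + h)" by (metis diff_diff_eq sin_pi_minus)
  ultimately have "(pi - \<phi> - h) * sin \<phi> \<le> (pi - \<phi>) * sin (\<phi> + h)" by simp
  then have "(pi - \<phi> - h) / (pi - \<phi>) \<le> sin (\<phi> + h) / sin \<phi>"
    using s1 assms by (simp add: field_simps)
  moreover have "(pi - \<phi> - h) / (pi - \<phi>) = 1 - h / (pi - \<phi>)" using assms by (simp add: field_simps)
  ultimately show "1 - h / (pi - \<phi>) \<le> sin (\<phi> + h) / sin \<phi>" by simp
qed

lemma core_upper: assumes "0 < \<phi>" "0 \<le> h" "\<phi> + h < pi"
  shows "ln (sin (\<phi> + h) / sin \<phi>) - sin h * cot \<phi> \<le> 0"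
proof -
  have "ln (sin (\<phi> + h) / sin \<phi>) \<le> sin (\<phi> + h) / sin \<phi> - 1"
    using core_basic(1)[OF assms] by (rule ln_le_minus_one)
  then show ?thesis using core_basic(2)[OF assms] cos_le_one[of h] by linarith
qed

lemma ln_4_ge: "3/4 \<le> ln (4::real)"
proof -
  have "ln (1/4::real) \<le> 1/4 - 1" by (rule ln_le_minus_one) simp
  then show ?thesis by (simp add: ln_div)
qed

lemma ln_w_bound: fixes y c :: real assumes "0 < c" "c < 1" "c \<le> y"
  shows "ln y - (y - 1) \<ge> - 4 * ln (4/c) * (y - 1)^2"
proof -
  have y0: "0 < y" using assms by linarith
  have L: "3/4 \<le> ln (4/c)"
  proof -
    have "ln 4 \<le> ln (4/c)" using assms by (subst ln_le_cancel_iff) (auto simp: field_simps)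
    then show ?thesis using ln_4_ge by linarith
  qed
  show ?thesis
  proof (cases "y \<ge> 1/2")
    case True
    have "ln (1/y) \<le> 1/y - 1" using y0 by (intro ln_le_minus_one) simp
    then have "1 - 1/y \<le> ln y" using y0 by (simp add: ln_div)
    moreover have "1 - 1/y - (y - 1) = - ((y-1)^2 / y)" using y0 by (simp add: field_simps power2_eq_square)
    moreover have "(y-1)^2 / y \<le> 2 * (y-1)^2"
    proof -
      have "(y-1)^2 * 1 \<le> (y-1)^2 * (2 * y)" using True by (intro mult_left_mono) auto
      then show ?thesis using y0 by (simp add: field_simps)
    qed
    moreover have "2 * (y-1)^2 \<le> 4 * ln (4/c) * (y - 1)^2" using L by (intro mult_right_mono) auto
    ultimately show ?thesis by linarith
  next
    case False
    have "ln c \<le> ln y" using assms by simp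
    moreover have "ln c \<ge> - ln (4/c)" using assms by (simp add: ln_div)
    moreover have "(y - 1)^2 \<ge> 1/4"
    proof -
      have "(1/2)^2 \<le> (1 - y)^2" using False by (intro power_mono) auto
      then show ?thesis by (simp add: power2_commute power_divide)
    qed
    moreover have "0 \<le> ln (4/c)" using L by linarith
    moreover have "ln (4/c) * 1 \<le> ln (4/c) * (4 * (y - 1)^2)"
      using \<open>(y - 1)^2 \<ge> 1/4\<close> \<open>0 \<le> ln (4/c)\<close> by (intro mult_left_mono) auto
    ultimately have "- 4 * ln (4/c) * (y - 1)^2 \<le> ln y" by linarith
    then show ?thesis using False by linarith
  qed
qed

lemma sq_sum_le: "((a::real) + b)^2 \<le> 2 * a^2 + 2 * b^2"
proof -
  have "2 * a^2 + 2 * b^2 - (a + b)^2 = (a - b)^2" by (simp add: power2_eq_square algebra_simps)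
  moreover have "0 \<le> (a - b)^2" by simp
  ultimately show ?thesis by linarith
qed

lemma core_lower: assumes "0 < \<phi>" "0 \<le> h" "\<phi> + h < pi" "0 < c" "c < 1"
  and cy: "c \<le> sin (\<phi> + h) / sin \<phi>"
  shows "ln (sin (\<phi> + h) / sin \<phi>) - sin h * cot \<phi> \<ge> - 200 * ln (4/c) * (h^2 * (1/\<phi>^2 + 1/(pi - \<phi>)^2))"
proof -
  define y where "y = sin (\<phi> + h) / sin \<phi>"
  define u where "u = sin h * cot \<phi>"
  define G where "G = 1/\<phi>^2 + 1/(pi - \<phi>)^2"
  define L where "L = ln (4/c)"
  have L: "3/4 \<le> L"
  proof -
    have "ln 4 \<le> ln (4/c)" using assms by (subst ln_le_cancel_iff) (auto simp: field_simps)
    then show ?thesis using ln_4_ge L_def by linarith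
  qed
  have yu: "y = cos h + u" unfolding y_def u_def by (rule core_basic(2)[OF assms(1-3)])
  have w: "ln y - (y - 1) \<ge> - 4 * L * (y - 1)^2" unfolding L_def using assms cy y_def by (intro ln_w_bound) auto
  have ch: "1 - cos h \<le> h^2/2" by (rule one_minus_cos_le)
  have ch0: "0 \<le> 1 - cos h" "1 - cos h \<le> 2" using cos_le_one[of h] cos_ge_minus_one[of h] by auto
  have "(1 - cos h)^2 \<le> 2 * (1 - cos h)" unfolding power2_eq_square using ch0 by (intro mult_right_mono) auto
  moreover have "2 * (1 - cos h) \<le> h^2" using ch by simp
  ultimately have c2: "(1 - cos h)^2 \<le> h^2" by (rule order.trans)
  have "u^2 \<le> h^2 * (cot \<phi>)^2"
  proof -
    have "\<bar>sin h\<bar> \<le> \<bar>h\<bar>" by (rule abs_sin_x_le_abs_x)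
    then have "(sin h)^2 \<le> h^2" by (metis power2_abs power_mono abs_ge_zero)
    then show ?thesis unfolding u_def by (simp add: power_mult_distrib mult_right_mono)
  qed
  moreover have "(cot \<phi>)^2 \<le> G" unfolding G_def using assms by (intro cot_sq) auto
  then have "h^2 * (cot \<phi>)^2 \<le> h^2 * G" by (intro mult_left_mono) auto
  ultimately have u2: "u^2 \<le> h^2 * G" by (rule order.trans)
  have "(y - 1)^2 = ((cos h - 1) + u)^2" using yu by (simp add: algebra_simps)
  also have "\<dots> \<le> 2 * (cos h - 1)^2 + 2 * u^2" by (rule sq_sum_le)
  finally have w2: "(y-1)^2 \<le> 2 * h^2 + 2 * (h^2 * G)" using c2 u2 by (simp add: power2_commute)
  have hG: "h^2 \<le> pi^2 * (h^2 * G)"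
  proof -
    have "\<phi>^2 \<le> pi^2" using assms by (intro power_mono) auto
    then have "1 \<le> pi^2 / \<phi>^2" using assms by (simp add: field_simps)
    moreover have "pi^2/\<phi>^2 \<le> pi^2 * G" unfolding G_def by (simp add: field_simps)
    ultimately have "1 \<le> pi^2 * G" by linarith
    then have "h^2 * 1 \<le> h^2 * (pi^2 * G)" by (intro mult_left_mono) auto
    then show ?thesis by (simp add: algebra_simps)
  qed
  have pi2: "pi^2 \<le> 4^2" using pi_less_4 pi_gt_zero by (intro power_mono) auto  
  define Q where "Q = h^2 * G"
  have Q0: "0 \<le> Q" unfolding Q_def G_def by simp
  have "ln y - u = (ln y - (y - 1)) - (1 - cos h)" using yu by simp
  also have "\<dots> \<ge> - 4 * L * (y - 1)^2 - h^2/2" using w ch by linarith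
  finally have A: "ln y - u \<ge> - 4 * L * (y - 1)^2 - h^2/2" .
  have "4 * L * (y - 1)^2 \<le> 4 * L * (2 * h^2 + 2 * Q)" using w2 L unfolding Q_def by (intro mult_left_mono) auto
  also have "\<dots> \<le> 4 * L * (2 * (16 * Q) + 2 * Q)"
  proof -
    have "pi^2 * Q \<le> 16 * Q" using pi2 Q0 by (intro mult_right_mono) auto
    then have "h^2 \<le> 16 * Q" using hG unfolding Q_def by linarith
    then show ?thesis using L by (intro mult_left_mono) auto
  qed
  finally have B: "4 * L * (y - 1)^2 \<le> 136 * (L * Q)" by (simp add: algebra_simps)
  have C: "h^2/2 \<le> 11 * (L * Q)"
  proof -
    have "pi^2 * Q \<le> 16 * Q" using pi2 Q0 by (intro mult_right_mono) auto
    then have "h^2 \<le> 16 * Q" using hG unfolding Q_def by linarith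
    moreover have "8 * Q \<le> 11 * (L * Q)"
    proof -
      have "(3/4) * Q \<le> L * Q" using L Q0 by (intro mult_right_mono) auto
      then show ?thesis using Q0 by linarith
    qed
    ultimately show ?thesis by linarith
  qed
  have LQ: "0 \<le> L * Q" using L Q0 by simp
  have "ln y - u \<ge> - 200 * (L * Q)" using A B C LQ by linarith
  then show ?thesis unfolding y_def u_def L_def Q_def G_def by simp
qed



lemma dvd_sign: assumes "(q::int) dvd (-1)^k * X" shows "q dvd X"
proof -
  have s: "(-1::int)^k * (-1)^k = 1" by (simp add: power_mult_distrib[symmetric])
  have "q dvd (-1)^k * ((-1)^k * X)" using assms by (rule dvd_mult)
  then show ?thesis by (simp add: mult.assoc[symmetric] s)
qed

definition rr :: "real \<Rightarrow> nat \<Rightarrow> nat \<Rightarrow> int" where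
  "rr \<alpha> k n = ((-1)^k * int n * cf_p \<alpha> k) mod cf_q \<alpha> k"

lemma rr_range: assumes "\<alpha> \<notin> \<rat>" "1 \<le> n" "int n < cf_q \<alpha> k"
  shows "1 \<le> rr \<alpha> k n \<and> rr \<alpha> k n \<le> cf_q \<alpha> k - 1"
proof -
  have q: "0 < cf_q \<alpha> k" using cf_q_ge1[OF assms(1), of k] by simp
  have "rr \<alpha> k n \<noteq> 0"
  proof
    assume "rr \<alpha> k n = 0"
    then have "cf_q \<alpha> k dvd (-1)^k * int n * cf_p \<alpha> k" unfolding rr_def by (simp add: mod_eq_0_iff_dvd)
    then have "cf_q \<alpha> k dvd (-1)^k * (int n * cf_p \<alpha> k)" by (simp add: mult.assoc)
    then have "cf_q \<alpha> k dvd int n * cf_p \<alpha> k" by (rule dvd_sign)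
    then have "cf_q \<alpha> k dvd int n" using cf_coprime_dvd by blast
    then have "cf_q \<alpha> k \<le> int n" using assms(2) by (intro zdvd_imp_le) auto
    then show False using assms(3) by simp
  qed
  moreover have "0 \<le> rr \<alpha> k n" "rr \<alpha> k n < cf_q \<alpha> k" unfolding rr_def using q by auto
  ultimately show ?thesis by auto
qed

lemma rr_inj: assumes "\<alpha> \<notin> \<rat>"
  shows "inj_on (rr \<alpha> k) {n. 1 \<le> n \<and> int n < cf_q \<alpha> k}"
proof (rule inj_onI)
  fix n1 n2 assume n1: "n1 \<in> {n. 1 \<le> n \<and> int n < cf_q \<alpha> k}" and n2: "n2 \<in> {n. 1 \<le> n \<and> int n < cf_q \<alpha> k}"
    and eq: "rr \<alpha> k n1 = rr \<alpha> k n2"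
  have "cf_q \<alpha> k dvd (-1)^k * int n1 * cf_p \<alpha> k - (-1)^k * int n2 * cf_p \<alpha> k"
    using eq unfolding rr_def by (simp add: mod_eq_dvd_iff)
  moreover have "(-1)^k * int n1 * cf_p \<alpha> k - (-1)^k * int n2 * cf_p \<alpha> k = (-1)^k * ((int n1 - int n2) * cf_p \<alpha> k)"
    by (simp add: algebra_simps)
  ultimately have "cf_q \<alpha> k dvd (-1)^k * ((int n1 - int n2) * cf_p \<alpha> k)" by simp
  then have "cf_q \<alpha> k dvd (int n1 - int n2) * cf_p \<alpha> k" by (rule dvd_sign)
  then have d: "cf_q \<alpha> k dvd (int n1 - int n2)" using cf_coprime_dvd by blast
  show "n1 = n2"
  proof (rule ccontr)
    assume "n1 \<noteq> n2"
    then have "int n1 - int n2 \<noteq> 0" by simp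
    then have "\<bar>cf_q \<alpha> k\<bar> \<le> \<bar>int n1 - int n2\<bar>" using d by (intro dvd_imp_le_int) auto
    then show False using n1 n2 cf_q_ge1[OF assms, of k] by auto
  qed
qed

lemma shift_mod: fixes m q :: int and w :: real assumes "0 < q"
  shows "\<bar>sin (pi * (real_of_int m + w) / q)\<bar> = \<bar>sin (pi * (real_of_int (m mod q) + w) / q)\<bar>
       \<and> cot (pi * (real_of_int m + w) / q) = cot (pi * (real_of_int (m mod q) + w) / q)"
proof -
  have m: "real_of_int m = of_int q * of_int (m div q) + of_int (m mod q)"
    by (metis div_mult_mod_eq of_int_add of_int_mult mult.commute)
  have "pi * (real_of_int m + w) / q = pi * (real_of_int (m mod q) + w) / q + of_int (m div q) * pi"
    unfolding m using assms by (simp add: field_simps)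
  then show ?thesis using int_pi_shift by presburger
qed


definition phi :: "real \<Rightarrow> nat \<Rightarrow> real \<Rightarrow> nat \<Rightarrow> real" where
  "phi \<alpha> k x n = pi * (of_int (rr \<alpha> k n) + x) / of_int (cf_q \<alpha> k)"

definition hh :: "real \<Rightarrow> nat \<Rightarrow> nat \<Rightarrow> real" where
  "hh \<alpha> k n = pi * real n * cf_e \<alpha> k / of_int (cf_q \<alpha> k)"

lemma sign_cases: "((-1::real)^k = 1 \<and> (-1::int)^k = 1) \<or> ((-1::real)^k = -1 \<and> (-1::int)^k = -1)"
  by (cases "even k") auto

lemma arg1: fixes q p e \<alpha> x :: real assumes "q > 0" "q * \<alpha> = p + \<sigma> * e" "\<sigma> = 1 \<or> \<sigma> = -1"
  shows "\<bar>sin (pi * (n * \<alpha> + \<sigma> * x / q))\<bar> = \<bar>sin (pi * (\<sigma> * n * p + (n * e + x)) / q)\<bar>"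
  using assms(3)
proof
  assume s: "\<sigma> = 1"
  have a: "\<alpha> = (p + e) / q" using assms(1,2) s by (simp add: field_simps)
  have "pi * (n * \<alpha> + \<sigma> * x / q) = pi * (\<sigma> * n * p + (n * e + x)) / q"
    unfolding a using assms(1) s by (simp add: field_simps)
  then show ?thesis by simp
next
  assume s: "\<sigma> = -1"
  have a: "\<alpha> = (p - e) / q" using assms(1,2) s by (simp add: field_simps)
  have "pi * (n * \<alpha> + \<sigma> * x / q) = - (pi * (\<sigma> * n * p + (n * e + x)) / q)"
    unfolding a using assms(1) s by (simp add: field_simps)
  then show ?thesis by (simp only: sin_minus abs_minus_cancel)
qed

lemma arg2: fixes q p x :: real assumes "q > 0" "\<sigma> = 1 \<or> \<sigma> = -1"
  shows "\<bar>sin (pi * (n * (p / q) + \<sigma> * x / q))\<bar> = \<bar>sin (pi * (\<sigma> * n * p + x) / q)\<bar>"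
  using assms(2)
proof
  assume s: "\<sigma> = 1"
  have "pi * (n * (p / q) + \<sigma> * x / q) = pi * (\<sigma> * n * p + x) / q"
    using assms(1) s by (simp add: field_simps)
  then show ?thesis by simp
next
  assume s: "\<sigma> = -1"
  have "pi * (n * (p / q) + \<sigma> * x / q) = - (pi * (\<sigma> * n * p + x) / q)"
    using assms(1) s by (simp add: field_simps)
  then show ?thesis by (simp only: sin_minus abs_minus_cancel)
qed

lemma terms:
  assumes "\<alpha> \<notin> \<rat>" "1 \<le> k" "1 \<le> n" "int n < cf_q \<alpha> k"
  defines "p \<equiv> real_of_int (cf_p \<alpha> k)" and "q \<equiv> real_of_int (cf_q \<alpha> k)"
  shows "\<bar>2 * sin (pi * (real n * \<alpha> + (-1)^k * x / q))\<bar> = 2 * \<bar>sin (phi \<alpha> k x n + hh \<alpha> k n)\<bar>"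
    and "\<bar>2 * sin (pi * (real n * (p / q) + (-1)^k * x / q))\<bar> = 2 * \<bar>sin (phi \<alpha> k x n)\<bar>"
    and "cot (pi * (real n * (-1)^k * p + x) / q) = cot (phi \<alpha> k x n)"
    and "sin (pi * real n * dist_int (q * \<alpha>) / q) = sin (hh \<alpha> k n)"
proof -
  have q0: "0 < cf_q \<alpha> k" using cf_q_ge1[OF assms(1), of k] by simp
  then have q: "q > 0" unfolding q_def by simp
  have sg: "(-1::real)^k = 1 \<or> (-1::real)^k = -1" using sign_cases by blast
  have m: "real_of_int ((-1)^k * int n * cf_p \<alpha> k) = (-1)^k * real n * p" unfolding p_def by simp
  have qa: "q * \<alpha> = p + (-1)^k * cf_e \<alpha> k" unfolding p_def q_def by (rule cf_qalpha)
  have "\<bar>sin (pi * (real n * \<alpha> + (-1)^k * x / q))\<bar> = \<bar>sin (pi * ((-1)^k * real n * p + (real n * cf_e \<alpha> k + x)) / q)\<bar>"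
    by (rule arg1[OF q qa sg])
  also have "\<dots> = \<bar>sin (pi * (real_of_int (rr \<alpha> k n) + (real n * cf_e \<alpha> k + x)) / q)\<bar>"
    using shift_mod[OF q0, of "(-1)^k * int n * cf_p \<alpha> k" "real n * cf_e \<alpha> k + x"] unfolding m rr_def q_def by simp
  also have "pi * (real_of_int (rr \<alpha> k n) + (real n * cf_e \<alpha> k + x)) / q = phi \<alpha> k x n + hh \<alpha> k n"
    unfolding phi_def hh_def q_def using q0 by (simp add: field_simps)
  finally show "\<bar>2 * sin (pi * (real n * \<alpha> + (-1)^k * x / q))\<bar> = 2 * \<bar>sin (phi \<alpha> k x n + hh \<alpha> k n)\<bar>"
    by (simp add: abs_mult)
  have "\<bar>sin (pi * (real n * (p / q) + (-1)^k * x / q))\<bar> = \<bar>sin (pi * ((-1)^k * real n * p + x) / q)\<bar>"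
    by (rule arg2[OF q sg])
  also have "\<dots> = \<bar>sin (phi \<alpha> k x n)\<bar>"
    using shift_mod[OF q0, of "(-1)^k * int n * cf_p \<alpha> k" x] unfolding m rr_def q_def phi_def by simp
  finally show "\<bar>2 * sin (pi * (real n * (p / q) + (-1)^k * x / q))\<bar> = 2 * \<bar>sin (phi \<alpha> k x n)\<bar>"
    by (simp add: abs_mult)
  have m2: "real n * (-1)^k * p = real_of_int ((-1)^k * int n * cf_p \<alpha> k)" unfolding p_def by simp
  show "cot (pi * (real n * (-1)^k * p + x) / q) = cot (phi \<alpha> k x n)"
    using shift_mod[OF q0, of "(-1)^k * int n * cf_p \<alpha> k" x] unfolding m2 rr_def q_def phi_def by simp
  show "sin (pi * real n * dist_int (q * \<alpha>) / q) = sin (hh \<alpha> k n)"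
    unfolding hh_def q_def cf_dist[OF assms(1,2)] ..
qed


lemma phi_range:
  assumes "\<alpha> \<notin> \<rat>" "1 \<le> n" "int n < cf_q \<alpha> k" "-1 < x" "x + real n * cf_e \<alpha> k < 1"
  shows "0 < phi \<alpha> k x n" "0 \<le> hh \<alpha> k n" "phi \<alpha> k x n + hh \<alpha> k n < pi"
proof -
  have q0: "0 < real_of_int (cf_q \<alpha> k)" using cf_q_ge1[OF assms(1), of k] by simp
  have r: "1 \<le> rr \<alpha> k n" "rr \<alpha> k n \<le> cf_q \<alpha> k - 1" using rr_range[OF assms(1-3)] by auto
  have r': "1 \<le> real_of_int (rr \<alpha> k n)" "real_of_int (rr \<alpha> k n) \<le> real_of_int (cf_q \<alpha> k) - 1"
    using r by linarith+
  have e0: "0 < cf_e \<alpha> k" by (rule cf_e_pos[OF assms(1)])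
  show "0 < phi \<alpha> k x n" unfolding phi_def using q0 r' assms(4) by (intro divide_pos_pos mult_pos_pos) auto
  show "0 \<le> hh \<alpha> k n" unfolding hh_def using q0 e0 by simp
  have eq: "phi \<alpha> k x n + hh \<alpha> k n = pi * ((rr \<alpha> k n + x + real n * cf_e \<alpha> k) / cf_q \<alpha> k)"
    unfolding phi_def hh_def using q0 by (simp add: field_simps)
  have z: "(rr \<alpha> k n + x + real n * cf_e \<alpha> k) / cf_q \<alpha> k < 1"
    using q0 r' assms(5) by (simp add: field_simps)
  have lt: "pi * ((rr \<alpha> k n + x + real n * cf_e \<alpha> k) / cf_q \<alpha> k) < pi * 1"
    using z pi_gt_zero by (rule mult_strict_left_mono)
  show "phi \<alpha> k x n + hh \<alpha> k n < pi" using eq lt by linarith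
qed

lemma B_repr:
  assumes "\<alpha> \<notin> \<rat>" "1 \<le> k" "int M < cf_q \<alpha> k" "-1 < x"
    and hx: "\<And>n. n \<in> {1..M} \<Longrightarrow> x + real n * cf_e \<alpha> k < 1"
  shows "B_fun \<alpha> k M x = (\<Sum>n=1..M. ln (sin (phi \<alpha> k x n + hh \<alpha> k n) / sin (phi \<alpha> k x n))
                                   - sin (hh \<alpha> k n) * cot (phi \<alpha> k x n))"
proof -
  define p where "p = real_of_int (cf_p \<alpha> k)"
  define q where "q = real_of_int (cf_q \<alpha> k)"
  have nr: "n \<in> {1..M} \<Longrightarrow> 1 \<le> n \<and> int n < cf_q \<alpha> k" for n using assms(3) by auto
  have pos: "n \<in> {1..M} \<Longrightarrow> 0 < sin (phi \<alpha> k x n) \<and> 0 < sin (phi \<alpha> k x n + hh \<alpha> k n)" for n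
  proof -
    assume n: "n \<in> {1..M}"
    note R = phi_range[OF assms(1) _ _ assms(4) hx[OF n]] 
    have "0 < phi \<alpha> k x n" "0 \<le> hh \<alpha> k n" "phi \<alpha> k x n + hh \<alpha> k n < pi" using R nr[OF n] by auto
    then show ?thesis by (auto intro!: sin_gt_zero)
  qed
  have P1: "sine_prod M \<alpha> ((-1)^k * x / q) = (\<Prod>n=1..M. 2 * sin (phi \<alpha> k x n + hh \<alpha> k n))"
    unfolding sine_prod_def
  proof (rule prod.cong[OF refl])
    fix n assume n: "n \<in> {1..M}"
    show "\<bar>2 * sin (pi * (real n * \<alpha> + (-1)^k * x / q))\<bar> = 2 * sin (phi \<alpha> k x n + hh \<alpha> k n)"
      using terms(1)[OF assms(1,2) conjunct1[OF nr[OF n]] conjunct2[OF nr[OF n]], of x] pos[OF n] unfolding q_def by simp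
  qed
  have P2: "sine_prod M (p / q) ((-1)^k * x / q) = (\<Prod>n=1..M. 2 * sin (phi \<alpha> k x n))"
    unfolding sine_prod_def
  proof (rule prod.cong[OF refl])
    fix n assume n: "n \<in> {1..M}"
    show "\<bar>2 * sin (pi * (real n * (p / q) + (-1)^k * x / q))\<bar> = 2 * sin (phi \<alpha> k x n)"
      using terms(2)[OF assms(1,2) conjunct1[OF nr[OF n]] conjunct2[OF nr[OF n]], of x] pos[OF n] unfolding q_def p_def by simp
  qed
  have S: "(\<Sum>n=1..M. sin (pi * real n * dist_int (q * \<alpha>) / q) * cot (pi * (real n * (-1)^k * p + x) / q))
        = (\<Sum>n=1..M. sin (hh \<alpha> k n) * cot (phi \<alpha> k x n))"
  proof (rule sum.cong[OF refl])
    fix n assume n: "n \<in> {1..M}"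
    show "sin (pi * real n * dist_int (q * \<alpha>) / q) * cot (pi * (real n * (-1)^k * p + x) / q) = sin (hh \<alpha> k n) * cot (phi \<alpha> k x n)"
      using terms(3)[OF assms(1,2) conjunct1[OF nr[OF n]] conjunct2[OF nr[OF n]], of x]
        terms(4)[OF assms(1,2) conjunct1[OF nr[OF n]] conjunct2[OF nr[OF n]]] unfolding q_def p_def by simp
  qed
  have D: "(\<Prod>n=1..M. 2 * sin (phi \<alpha> k x n + hh \<alpha> k n)) / (\<Prod>n=1..M. 2 * sin (phi \<alpha> k x n))
        = (\<Prod>n=1..M. sin (phi \<alpha> k x n + hh \<alpha> k n) / sin (phi \<alpha> k x n))"
    by (simp add: prod_dividef[symmetric])
  have L: "ln (\<Prod>n=1..M. sin (phi \<alpha> k x n + hh \<alpha> k n) / sin (phi \<alpha> k x n))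
        = (\<Sum>n=1..M. ln (sin (phi \<alpha> k x n + hh \<alpha> k n) / sin (phi \<alpha> k x n)))"
  proof (rule ln_prod)
    fix n assume "n \<in> {1..M}"
    then show "sin (phi \<alpha> k x n + hh \<alpha> k n) / sin (phi \<alpha> k x n) \<noteq> 0" using pos by force
  qed simp
  have "B_fun \<alpha> k M x = ln (sine_prod M \<alpha> ((-1)^k * x / q) / sine_prod M (p / q) ((-1)^k * x / q))
       - (\<Sum>n=1..M. sin (pi * real n * dist_int (q * \<alpha>) / q) * cot (pi * (real n * (-1)^k * p + x) / q))"
    unfolding B_fun_def Let_def p_def q_def ..
  also have "\<dots> = (\<Sum>n=1..M. ln (sin (phi \<alpha> k x n + hh \<alpha> k n) / sin (phi \<alpha> k x n)))
       - (\<Sum>n=1..M. sin (hh \<alpha> k n) * cot (phi \<alpha> k x n))"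
    unfolding P1 P2 S D L ..
  finally show ?thesis by (simp add: sum_subtractf)
qed



lemma recip_id: "0 < (d::real) \<Longrightarrow> (d + 1) / d^2 = 1 / d^2 + 1 / d"
  by (simp add: field_simps power2_eq_square)

lemma inv_sq_sum: "1 \<le> N \<Longrightarrow> (\<Sum>r=1..N. 1 / (real r)^2) \<le> 2 - 1 / real N"
proof (induction N rule: dec_induct)
  case base then show ?case by simp
next
  case (step N)
  have N: "1 \<le> real N" using step by simp
  have "(\<Sum>r=1..Suc N. 1 / (real r)^2) = (\<Sum>r=1..N. 1 / (real r)^2) + 1 / (real N + 1)^2" by simp
  also have "\<dots> \<le> 2 - 1 / real N + 1 / (real N + 1)^2" using step by simp
  also have "\<dots> \<le> 2 - 1 / (real N + 1)"
  proof -
    have "real N * (real N + 2) \<le> (real N + 1)^2" by (simp add: power2_eq_square algebra_simps)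
    then have "(real N + 2) / (real N + 1)^2 \<le> 1 / real N" using N by (simp add: field_simps)
    moreover have "(real N + 2) / (real N + 1)^2 = 1 / (real N + 1)^2 + 1 / (real N + 1)"
      using recip_id[of "real N + 1"] by (simp add: add.commute)
    ultimately show ?thesis by linarith
  qed
  finally show ?case by (simp add: add.commute)
qed

lemma inv_sq_sum2: "(\<Sum>r=1..N. 1 / (real r)^2) \<le> 2"
proof (cases "N = 0")
  case True then show ?thesis by simp
next
  case False
  then have "(\<Sum>r=1..N. 1 / (real r)^2) \<le> 2 - 1 / real N" by (intro inv_sq_sum) auto
  moreover have "0 \<le> 1 / real N" by simp
  ultimately show ?thesis by linarith
qed

lemma inj_sum: fixes g :: "nat \<Rightarrow> nat" and z :: real
  assumes inj: "inj_on g A" and rng: "\<And>n. n \<in> A \<Longrightarrow> 1 \<le> g n \<and> g n \<le> N" and z: "\<bar>z\<bar> < 1"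
  shows "(\<Sum>n\<in>A. 1 / (real (g n) + z)^2) \<le> 2 / (1 - \<bar>z\<bar>)^2"
proof -
  define f where "f r = 1 / (real r + z)^2" for r
  define \<epsilon> where "\<epsilon> = 1 - \<bar>z\<bar>"
  have \<epsilon>: "0 < \<epsilon>" "\<epsilon> \<le> 1" unfolding \<epsilon>_def using z by auto
  have sub: "g ` A \<subseteq> {1..N}" using rng by auto
  then have finA: "finite A" using inj finite_subset[OF sub] finite_imageD by blast
  have "(\<Sum>n\<in>A. 1 / (real (g n) + z)^2) = (\<Sum>r\<in>g ` A. f r)"
    unfolding f_def by (simp add: sum.reindex[OF inj])
  also have "\<dots> \<le> (\<Sum>r\<in>{1..N}. f r)"
    by (rule sum_mono2) (use sub in \<open>auto simp: f_def\<close>)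
  also have "\<dots> \<le> (\<Sum>r\<in>{1..N}. (1 / \<epsilon>^2) * (1 / (real r)^2))"
  proof (rule sum_mono)
    fix r assume r: "r \<in> {1..N}"
    then have r1: "1 \<le> real r" "0 < r" by auto
    have "real r * \<epsilon> \<le> real r + z"
    proof -
      have "real r * \<bar>z\<bar> \<ge> \<bar>z\<bar>" using r1 by (simp add: mult_le_cancel_right1)
      then show ?thesis unfolding \<epsilon>_def by (simp add: algebra_simps)
    qed
    moreover have "0 < real r * \<epsilon>" using r1 \<epsilon> by simp
    ultimately have "(real r * \<epsilon>)^2 \<le> (real r + z)^2" by (intro power_mono) auto
    then have "1 / (real r + z)^2 \<le> 1 / (real r * \<epsilon>)^2"
      using \<open>0 < real r * \<epsilon>\<close> \<open>real r * \<epsilon> \<le> real r + z\<close> by (intro divide_left_mono mult_pos_pos) (auto simp: r1)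
    then show "f r \<le> (1 / \<epsilon>^2) * (1 / (real r)^2)" unfolding f_def by (simp add: power_mult_distrib mult.commute)
  qed
  also have "\<dots> = (1 / \<epsilon>^2) * (\<Sum>r=1..N. 1 / (real r)^2)" by (simp add: sum_distrib_left)
  also have "\<dots> \<le> (1 / \<epsilon>^2) * 2" using inv_sq_sum2 by (intro mult_left_mono) auto
  finally show ?thesis unfolding \<epsilon>_def by simp
qed

lemma B_upper:
  assumes "\<alpha> \<notin> \<rat>" "1 \<le> k" "int M < cf_q \<alpha> k" "-1 < x"
    and hx: "\<And>n. n \<in> {1..M} \<Longrightarrow> x + real n * cf_e \<alpha> k < 1"
  shows "B_fun \<alpha> k M x \<le> 0"
proof -
  have "B_fun \<alpha> k M x = (\<Sum>n=1..M. ln (sin (phi \<alpha> k x n + hh \<alpha> k n) / sin (phi \<alpha> k x n))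
                                   - sin (hh \<alpha> k n) * cot (phi \<alpha> k x n))"
    by (rule B_repr[OF assms])
  also have "\<dots> \<le> (\<Sum>n=1..M. 0)"
  proof (rule sum_mono)
    fix n assume n: "n \<in> {1..M}"
    then have "1 \<le> n" "int n < cf_q \<alpha> k" using assms(3) by auto
    note R = phi_range[OF assms(1) this assms(4) hx[OF n]]
    show "ln (sin (phi \<alpha> k x n + hh \<alpha> k n) / sin (phi \<alpha> k x n)) - sin (hh \<alpha> k n) * cot (phi \<alpha> k x n) \<le> 0"
      by (rule core_upper[OF R])
  qed
  finally show ?thesis by simp
qed


lemma rr_sums:
  assumes "\<alpha> \<notin> \<rat>" "int M < cf_q \<alpha> k" "\<bar>x\<bar> < 1"
  shows "(\<Sum>n=1..M. 1 / (real_of_int (rr \<alpha> k n) + x)^2 + 1 / (real_of_int (cf_q \<alpha> k) - rr \<alpha> k n - x)^2)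
         \<le> 4 / (1 - \<bar>x\<bar>)^2"
proof -
  define g1 where "g1 n = nat (rr \<alpha> k n)" for n
  define g2 where "g2 n = nat (cf_q \<alpha> k - rr \<alpha> k n)" for n
  have sub: "{1..M} \<subseteq> {n. 1 \<le> n \<and> int n < cf_q \<alpha> k}" using assms(2) by auto
  have R: "n \<in> {1..M} \<Longrightarrow> 1 \<le> rr \<alpha> k n \<and> rr \<alpha> k n \<le> cf_q \<alpha> k - 1" for n
    using rr_range[OF assms(1)] sub by blast
  have inj0: "inj_on (rr \<alpha> k) {1..M}" using inj_on_subset[OF rr_inj[OF assms(1)] sub] .
  have inj1: "inj_on g1 {1..M}"
  proof (rule inj_onI)
    fix a b assume "a \<in> {1..M}" "b \<in> {1..M}" "g1 a = g1 b"
    then have "rr \<alpha> k a = rr \<alpha> k b" using R unfolding g1_def by (metis nat_eq_iff2 order.trans zero_le_one)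
    then show "a = b" using inj0 \<open>a \<in> {1..M}\<close> \<open>b \<in> {1..M}\<close> by (simp add: inj_on_eq_iff)
  qed
  have inj2: "inj_on g2 {1..M}"
  proof (rule inj_onI)
    fix a b assume "a \<in> {1..M}" "b \<in> {1..M}" "g2 a = g2 b"
    then have "cf_q \<alpha> k - rr \<alpha> k a = cf_q \<alpha> k - rr \<alpha> k b" using R[of a] R[of b] unfolding g2_def by (subst (asm) eq_nat_nat_iff) auto
    then have "rr \<alpha> k a = rr \<alpha> k b" by simp
    then show "a = b" using inj0 \<open>a \<in> {1..M}\<close> \<open>b \<in> {1..M}\<close> by (simp add: inj_on_eq_iff)
  qed
  have r1: "n \<in> {1..M} \<Longrightarrow> 1 \<le> g1 n \<and> g1 n \<le> nat (cf_q \<alpha> k)" for n using R[of n] unfolding g1_def by auto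
  have r2: "n \<in> {1..M} \<Longrightarrow> 1 \<le> g2 n \<and> g2 n \<le> nat (cf_q \<alpha> k)" for n using R[of n] unfolding g2_def by auto
  have e1: "n \<in> {1..M} \<Longrightarrow> real (g1 n) = real_of_int (rr \<alpha> k n)" for n using R[of n] unfolding g1_def by simp
  have e2: "n \<in> {1..M} \<Longrightarrow> real (g2 n) = real_of_int (cf_q \<alpha> k) - rr \<alpha> k n" for n using R[of n] unfolding g2_def by simp
  have S1: "(\<Sum>n=1..M. 1 / (real (g1 n) + x)^2) \<le> 2 / (1 - \<bar>x\<bar>)^2"
    by (rule inj_sum[OF inj1 r1 assms(3)])
  have S2: "(\<Sum>n=1..M. 1 / (real (g2 n) + (-x))^2) \<le> 2 / (1 - \<bar>-x\<bar>)^2"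
  proof (rule inj_sum[OF inj2 r2])
    show "\<bar>- x\<bar> < 1" using assms(3) by (simp only: abs_minus_cancel)
  qed
  have "(\<Sum>n=1..M. 1 / (real_of_int (rr \<alpha> k n) + x)^2 + 1 / (real_of_int (cf_q \<alpha> k) - rr \<alpha> k n - x)^2)
      = (\<Sum>n=1..M. 1 / (real (g1 n) + x)^2) + (\<Sum>n=1..M. 1 / (real (g2 n) + (-x))^2)"
    by (simp add: sum.distrib e1 e2)
  also have "\<dots> \<le> 2 / (1 - \<bar>x\<bar>)^2 + 2 / (1 - \<bar>x\<bar>)^2" using S1 S2 by simp
  finally show ?thesis by simp
qed


lemma div_cancel2: "(p::real) \<noteq> 0 \<Longrightarrow> q \<noteq> 0 \<Longrightarrow> (p * A / q) / (p * B / q) = A / B"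
  by (cases "B = 0") (simp_all add: field_simps)

lemma sq_cancel: assumes "(p::real) \<noteq> 0" "q \<noteq> 0" shows "(p * A / q)^2 * (1 / (p * B / q)^2) = A^2 * (1 / B^2)"
proof -
  have "(p * A / q)^2 * (1 / (p * B / q)^2) = ((p * A / q) / (p * B / q))^2" by (simp add: power_divide)
  also have "\<dots> = (A / B)^2" using div_cancel2[OF assms] by simp
  finally show ?thesis by (simp add: power_divide)
qed

lemma B_lower:
  assumes A: "\<alpha> \<notin> \<rat>" and k: "1 \<le> k" and Mq: "int M < cf_q \<alpha> k" and c: "0 < c" "c < 1"
    and x1: "-1 < x" and x2: "x \<le> 1 - real_of_int (cf_q \<alpha> k) * cf_e \<alpha> k / (1 - c)"
  shows "- 800 * ln (4 / c) / ((1 - \<bar>x\<bar>)^2 * (real_of_int (cf_a \<alpha> (k + 1)))^2) \<le> B_fun \<alpha> k M x"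
proof -
  define q where "q = real_of_int (cf_q \<alpha> k)"
  define e where "e = cf_e \<alpha> k"
  define a where "a = real_of_int (cf_a \<alpha> (k + 1))"
  define L where "L = ln (4 / c)"
  have q0: "0 < q" using cf_q_ge1[OF A, of k] unfolding q_def by simp
  have e0: "0 < e" unfolding e_def using cf_e_pos[OF A] .
  have a1: "1 \<le> a" unfolding a_def using cf_a_ge1[OF A, of k] by simp
  have aqe: "a * q * e < 1" unfolding a_def q_def e_def using cf_aqe_lt1[OF A, of k] by simp
  have L0: "0 \<le> L" unfolding L_def using c by simp
  have qe0: "0 < q * e / (1 - c)" using q0 e0 c by simp
  have qe1: "q * e \<le> q * e / (1 - c)" using q0 e0 c by (simp add: field_simps)
  have x2': "x \<le> 1 - q * e / (1 - c)" using x2 unfolding q_def e_def .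
  have xlt: "x < 1" using x2' qe0 by linarith
  have ax: "\<bar>x\<bar> < 1" using xlt x1 by auto
  have om: "q * e \<le> (1 - c) * (1 - x)"
  proof -
    have "q * e / (1 - c) \<le> 1 - x" using x2' by linarith
    then show ?thesis using c by (simp add: field_simps)
  qed
  have nM: "n \<in> {1..M} \<Longrightarrow> 1 \<le> n \<and> int n < cf_q \<alpha> k \<and> real n < q" for n
    using Mq unfolding q_def by auto
  have hx: "x + real n * cf_e \<alpha> k < 1" if n: "n \<in> {1..M}" for n
  proof -
    have "real n * e < q * e" using nM[OF n] e0 by simp
    then show ?thesis using qe1 x2' unfolding e_def by linarith
  qed
  have Brep: "B_fun \<alpha> k M x = (\<Sum>n=1..M. ln (sin (phi \<alpha> k x n + hh \<alpha> k n) / sin (phi \<alpha> k x n))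
                                   - sin (hh \<alpha> k n) * cot (phi \<alpha> k x n))"
    by (rule B_repr[OF A k Mq x1 hx])
  define D where "D n = 1 / (real_of_int (rr \<alpha> k n) + x)^2 + 1 / (real_of_int (cf_q \<alpha> k) - rr \<alpha> k n - x)^2" for n
  have termb: "ln (sin (phi \<alpha> k x n + hh \<alpha> k n) / sin (phi \<alpha> k x n)) - sin (hh \<alpha> k n) * cot (phi \<alpha> k x n)
      \<ge> - 200 * L * ((1 / a^2) * D n)" if n: "n \<in> {1..M}" for n
  proof -
    note R = phi_range[OF A conjunct1[OF nM[OF n]] conjunct1[OF conjunct2[OF nM[OF n]]] x1 hx[OF n]]
    define r where "r = real_of_int (rr \<alpha> k n)"
    have rb: "1 \<le> r" "r \<le> q - 1" using rr_range[OF A conjunct1[OF nM[OF n]] conjunct1[OF conjunct2[OF nM[OF n]]]]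
      unfolding r_def q_def by linarith+
    have rx: "0 < r + x" using rb x1 by linarith
    have qrx: "1 - x \<le> q - r - x" using rb by linarith
    have qrx0: "0 < q - r - x" using qrx xlt by linarith
    have ph: "phi \<alpha> k x n = pi * (r + x) / q" unfolding phi_def r_def q_def ..
    have hd: "hh \<alpha> k n = pi * (real n * e) / q" unfolding hh_def e_def q_def by simp
    have pmp: "pi - phi \<alpha> k x n = pi * (q - r - x) / q" unfolding ph using q0 by (simp add: field_simps)
    have ratio: "hh \<alpha> k n / (pi - phi \<alpha> k x n) = real n * e / (q - r - x)"
      unfolding pmp hd using q0 by (intro div_cancel2) auto
    have "real n * e / (q - r - x) \<le> q * e / (1 - x)"
    proof -
      have "real n * e \<le> q * e" using nM[OF n] e0 by simp
      moreover have "0 \<le> real n * e" using e0 by simp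
      ultimately show ?thesis using qrx xlt by (intro frac_le) auto
    qed
    also have "\<dots> \<le> 1 - c" using om xlt by (simp add: field_simps)
    finally have "c \<le> 1 - hh \<alpha> k n / (pi - phi \<alpha> k x n)" unfolding ratio by linarith
    then have cy: "c \<le> sin (phi \<alpha> k x n + hh \<alpha> k n) / sin (phi \<alpha> k x n)"
      using core_basic(3)[OF R] by linarith
    have T: "ln (sin (phi \<alpha> k x n + hh \<alpha> k n) / sin (phi \<alpha> k x n)) - sin (hh \<alpha> k n) * cot (phi \<alpha> k x n)
       \<ge> - 200 * L * ((hh \<alpha> k n)^2 * (1/(phi \<alpha> k x n)^2 + 1/(pi - phi \<alpha> k x n)^2))"
      unfolding L_def by (rule core_lower[OF R c cy])
    have Q: "(hh \<alpha> k n)^2 * (1/(phi \<alpha> k x n)^2 + 1/(pi - phi \<alpha> k x n)^2) = (real n * e)^2 * D n"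
    proof -
      have "(hh \<alpha> k n)^2 * (1/(phi \<alpha> k x n)^2) = (real n * e)^2 * (1 / (r + x)^2)"
        unfolding ph hd using q0 by (intro sq_cancel) auto
      moreover have "(hh \<alpha> k n)^2 * (1/(pi - phi \<alpha> k x n)^2) = (real n * e)^2 * (1 / (q - r - x)^2)"
        unfolding pmp hd using q0 by (intro sq_cancel) auto
      ultimately show ?thesis unfolding D_def r_def[symmetric] q_def[symmetric] by (simp add: algebra_simps)
    qed
    have ne: "(real n * e)^2 \<le> 1 / a^2"
    proof -
      have "a * (real n * e) \<le> a * (q * e)" using nM[OF n] e0 a1 by (intro mult_left_mono) auto
      then have "a * (real n * e) < 1" using aqe by (simp add: mult.assoc)
      moreover have "0 \<le> a * (real n * e)" using a1 e0 by simp
      ultimately have "(a * (real n * e))^2 \<le> 1^2" by (intro power_mono) auto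
      then show ?thesis using a1 by (simp add: field_simps power_mult_distrib)
    qed
    have D0: "0 \<le> D n" unfolding D_def by simp
    have "(real n * e)^2 * D n \<le> (1 / a^2) * D n" using ne D0 by (rule mult_right_mono)
    then have "200 * L * ((real n * e)^2 * D n) \<le> 200 * L * ((1 / a^2) * D n)" using L0 by (intro mult_left_mono) auto
    then show ?thesis using T unfolding Q by linarith
  qed
  have "B_fun \<alpha> k M x \<ge> (\<Sum>n=1..M. - 200 * L * ((1 / a^2) * D n))"
    unfolding Brep by (rule sum_mono) (rule termb)
  moreover have "(\<Sum>n=1..M. - 200 * L * ((1 / a^2) * D n)) = - 200 * L * (1 / a^2) * (\<Sum>n=1..M. D n)"
    by (simp add: sum_distrib_left mult.assoc)
  moreover have "(\<Sum>n=1..M. D n) \<le> 4 / (1 - \<bar>x\<bar>)^2" unfolding D_def by (rule rr_sums[OF A Mq ax])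
  moreover have "0 \<le> 200 * L * (1 / a^2)" using L0 by simp
  ultimately have "B_fun \<alpha> k M x \<ge> - (200 * L * (1 / a^2) * (4 / (1 - \<bar>x\<bar>)^2))"
  proof -
    define K where "K = 200 * L * (1 / a^2)"
    assume h1: "(\<Sum>n=1..M. - 200 * L * ((1 / a^2) * D n)) \<le> B_fun \<alpha> k M x"
      and h2: "(\<Sum>n=1..M. - 200 * L * ((1 / a^2) * D n)) = - 200 * L * (1 / a^2) * (\<Sum>n=1..M. D n)"
      and h3: "(\<Sum>n=1..M. D n) \<le> 4 / (1 - \<bar>x\<bar>)^2" and h4: "0 \<le> 200 * L * (1 / a^2)"
    have "K * (\<Sum>n=1..M. D n) \<le> K * (4 / (1 - \<bar>x\<bar>)^2)" using h3 h4 unfolding K_def by (rule mult_left_mono)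
    moreover have "- 200 * L * (1 / a^2) * (\<Sum>n=1..M. D n) = - (K * (\<Sum>n=1..M. D n))" unfolding K_def by simp
    ultimately show ?thesis using h1 h2 unfolding K_def by linarith
  qed
  moreover have "- (200 * L * (1 / a^2) * (4 / (1 - \<bar>x\<bar>)^2)) = - 800 * L / ((1 - \<bar>x\<bar>)^2 * a^2)"
    using ax a1 by (simp add: field_simps)
  ultimately show ?thesis unfolding L_def a_def by (simp add: mult.commute)
qed



definition Tsum :: "real \<Rightarrow> nat \<Rightarrow> (nat \<Rightarrow> nat) \<Rightarrow> nat \<Rightarrow> real" where
  "Tsum \<alpha> K b j = (\<Sum>l\<in>{j..<K}. (-1)^(l+j) * real (b l) * cf_e \<alpha> l)"

lemma Tsum_step: assumes "j < K" shows "Tsum \<alpha> K b j = real (b j) * cf_e \<alpha> j - Tsum \<alpha> K b (Suc j)"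
proof -
  have s: "{j..<K} = insert j {Suc j..<K}" using assms by auto
  have "(\<Sum>l\<in>{Suc j..<K}. (-1)^(l+j) * real (b l) * cf_e \<alpha> l) = - Tsum \<alpha> K b (Suc j)"
    unfolding Tsum_def sum_negf[symmetric] by (rule sum.cong) auto
  moreover have "(-1::real)^(j+j) = 1" by (simp add: power_add[symmetric] flip: mult_2)
  ultimately show ?thesis unfolding Tsum_def s by (simp add: sum.insert)
qed

lemma Tsum_bounds:
  assumes A: "\<alpha> \<notin> \<rat>" and bnd: "\<And>l. l < K \<Longrightarrow> int (b l) \<le> cf_a \<alpha> (Suc l)"
  shows "1 \<le> j \<Longrightarrow> - cf_e \<alpha> j \<le> Tsum \<alpha> K b j \<and> Tsum \<alpha> K b j \<le> cf_e \<alpha> (j - 1)"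
proof (induction "K - j" arbitrary: j)
  case 0
  then have "Tsum \<alpha> K b j = 0" unfolding Tsum_def by simp
  then show ?case using cf_e_pos[OF A, of j] cf_e_pos[OF A, of "j-1"] by simp
next
  case (Suc d)
  then have jK: "j < K" by simp
  have IH: "- cf_e \<alpha> (Suc j) \<le> Tsum \<alpha> K b (Suc j) \<and> Tsum \<alpha> K b (Suc j) \<le> cf_e \<alpha> j"
    using Suc.hyps(1)[of "Suc j"] Suc.hyps(2) by simp
  have st: "Tsum \<alpha> K b j = real (b j) * cf_e \<alpha> j - Tsum \<alpha> K b (Suc j)" by (rule Tsum_step[OF jK])
  have e: "0 < cf_e \<alpha> j" by (rule cf_e_pos[OF A])
  have bj: "real (b j) \<le> cf_a \<alpha> (Suc j)" using bnd[OF jK] by linarith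
  have "real (b j) * cf_e \<alpha> j \<le> cf_a \<alpha> (Suc j) * cf_e \<alpha> j" using bj e by (intro mult_right_mono) auto
  moreover have "cf_e \<alpha> (j - 1) = cf_a \<alpha> (Suc j) * cf_e \<alpha> j + cf_e \<alpha> (Suc j)"
    using cf_e_rec2[of \<alpha> "j - 1"] Suc.prems by simp
  moreover have "0 \<le> real (b j) * cf_e \<alpha> j" using e by simp
  ultimately show ?case using IH st by linarith
qed

lemma eps_bounds:
  assumes A: "\<alpha> \<notin> \<rat>" and bnd: "\<And>l. l < K \<Longrightarrow> int (b l) \<le> cf_a \<alpha> (Suc l)" and k: "1 \<le> k"
  shows "- real_of_int (cf_q \<alpha> k) * cf_e \<alpha> k \<le> ostrowski_eps \<alpha> K b k
       \<and> ostrowski_eps \<alpha> K b k \<le> real_of_int (cf_q \<alpha> k) * cf_e \<alpha> (Suc k)"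
proof -
  have "(\<Sum>l\<in>{k+1..<K}. (-1)^(k + l) * real (b l) * dist_int (real_of_int (cf_q \<alpha> l) * \<alpha>)) = - Tsum \<alpha> K b (Suc k)"
    unfolding Tsum_def sum_negf[symmetric]
  proof (rule sum.cong)
    fix l assume l: "l \<in> {Suc k..<K}"
    then have "dist_int (real_of_int (cf_q \<alpha> l) * \<alpha>) = cf_e \<alpha> l" using k by (intro cf_dist[OF A]) auto
    moreover have "(-1::real)^(k + l) = -((-1)^(l + Suc k))" by (simp add: add.commute)
    ultimately show "(-1)^(k + l) * real (b l) * dist_int (real_of_int (cf_q \<alpha> l) * \<alpha>) = - ((-1)^(l + Suc k) * real (b l) * cf_e \<alpha> l)"
      by simp
  qed simp
  then have E: "ostrowski_eps \<alpha> K b k = - real_of_int (cf_q \<alpha> k) * Tsum \<alpha> K b (Suc k)"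
    unfolding ostrowski_eps_def by simp
  have T: "- cf_e \<alpha> (Suc k) \<le> Tsum \<alpha> K b (Suc k) \<and> Tsum \<alpha> K b (Suc k) \<le> cf_e \<alpha> k"
    using Tsum_bounds[OF A bnd, where j = "Suc k"] by simp
  have q: "0 < real_of_int (cf_q \<alpha> k)" using cf_q_ge1[OF A, of k] by simp
  have "real_of_int (cf_q \<alpha> k) * Tsum \<alpha> K b (Suc k) \<le> real_of_int (cf_q \<alpha> k) * cf_e \<alpha> k"
    using T q by (intro mult_left_mono) auto
  moreover have "real_of_int (cf_q \<alpha> k) * (- cf_e \<alpha> (Suc k)) \<le> real_of_int (cf_q \<alpha> k) * Tsum \<alpha> K b (Suc k)"
    using T q by (intro mult_left_mono) auto
  ultimately show ?thesis unfolding E by simp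
qed

lemma part2:
  assumes A: "\<alpha> \<notin> \<rat>" and O: "ostrowski_expansion \<alpha> N K b" and k: "1 \<le> k" "k \<le> K - 1"
    and Mq: "int M < cf_q \<alpha> k" and bb: "bb + 1 \<le> b k"
  shows "B_fun \<alpha> k M (real bb * real_of_int (cf_q \<alpha> k) * dist_int (real_of_int (cf_q \<alpha> k) * \<alpha>)
                      + ostrowski_eps \<alpha> K b k) \<le> 0"
proof -
  define q where "q = real_of_int (cf_q \<alpha> k)"
  define e where "e = cf_e \<alpha> k"
  define x where "x = real bb * real_of_int (cf_q \<alpha> k) * dist_int (real_of_int (cf_q \<alpha> k) * \<alpha>) + ostrowski_eps \<alpha> K b k"
  have kK: "k < K" using k by simp
  have bnd: "\<And>l. l < K \<Longrightarrow> int (b l) \<le> cf_a \<alpha> (Suc l)" using O unfolding ostrowski_expansion_def by auto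
  have q0: "0 < q" unfolding q_def using cf_q_ge1[OF A, of k] by simp
  have e0: "0 < e" unfolding e_def by (rule cf_e_pos[OF A])
  have EB: "- q * e \<le> ostrowski_eps \<alpha> K b k \<and> ostrowski_eps \<alpha> K b k \<le> q * cf_e \<alpha> (Suc k)"
    unfolding q_def e_def by (rule eps_bounds[OF A bnd k(1)])
  have xd: "x = real bb * q * e + ostrowski_eps \<alpha> K b k" unfolding x_def q_def e_def cf_dist[OF A k(1)] ..
  have a1: "1 \<le> real_of_int (cf_a \<alpha> (Suc k))" using cf_a_ge1[OF A, of k] by simp
  have aqe: "real_of_int (cf_a \<alpha> (Suc k)) * q * e < 1" unfolding q_def e_def using cf_aqe_lt1[OF A, of k] by simp
  have "q * e \<le> real_of_int (cf_a \<alpha> (Suc k)) * q * e" using a1 q0 e0 by simp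
  then have qe1: "q * e < 1" using aqe by linarith
  have "0 \<le> real bb * q * e" using q0 e0 by simp
  then have x1: "-1 < x" unfolding xd using EB qe1 by linarith
  have prev: "q * cf_e \<alpha> (k - 1) < 1" using cf_qe_lt1[OF A, of "k - 1"] k unfolding q_def by simp
  have rec: "cf_e \<alpha> (k - 1) = cf_a \<alpha> (Suc k) * e + cf_e \<alpha> (Suc k)" unfolding e_def using cf_e_rec2[of \<alpha> "k - 1"] k by simp
  have bk: "real (b k) \<le> real_of_int (cf_a \<alpha> (Suc k))" using bnd[OF kK] by linarith
  have hx: "x + real n * cf_e \<alpha> k < 1" if n: "n \<in> {1..M}" for n
  proof -
    have nq: "real n < q" using n Mq unfolding q_def by auto
    have "real n * e < q * e" using nq e0 by simp
    moreover have "real bb * q * e \<le> (real (b k) - 1) * q * e" using bb q0 e0 by (intro mult_right_mono) auto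
    moreover have "real (b k) * q * e \<le> real_of_int (cf_a \<alpha> (Suc k)) * q * e" using bk q0 e0 by (intro mult_right_mono) auto
    moreover have "q * cf_e \<alpha> (k - 1) = real_of_int (cf_a \<alpha> (Suc k)) * q * e + q * cf_e \<alpha> (Suc k)"
      unfolding rec by (simp add: algebra_simps)
    moreover have "(real (b k) - 1) * q * e = real (b k) * q * e - q * e" by (simp add: algebra_simps)
    ultimately have "x + real n * e < 1" unfolding xd using EB prev by linarith
    then show ?thesis unfolding e_def .
  qed
  have "B_fun \<alpha> k M x \<le> 0" by (rule B_upper[OF A k(1) Mq x1 hx])
  then show ?thesis unfolding x_def .
qed



lemma hx_part1:
  assumes A: "\<alpha> \<notin> \<rat>" and Mq: "int M < cf_q \<alpha> k" and c: "0 < c" "c < 1"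
    and x2: "x \<le> 1 - real_of_int (cf_q \<alpha> k) * cf_e \<alpha> k / (1 - c)" and n: "n \<in> {1..M}"
  shows "x + real n * cf_e \<alpha> k < 1"
proof -
  define q where "q = real_of_int (cf_q \<alpha> k)"
  define e where "e = cf_e \<alpha> k"
  have q0: "0 < q" using cf_q_ge1[OF A, of k] unfolding q_def by simp
  have e0: "0 < e" unfolding e_def using cf_e_pos[OF A] .
  have qe1: "q * e \<le> q * e / (1 - c)" using q0 e0 c by (simp add: field_simps)
  have "real n < q" using n Mq unfolding q_def by auto
  then have "real n * e < q * e" using e0 by simp
  then show ?thesis using qe1 x2 unfolding e_def q_def by linarith
qed

theorem proposition2:
  shows
  "(\<exists>C>0. \<forall>\<alpha> k M c x.
      \<alpha> \<notin> \<rat> \<longrightarrow> 1 \<le> k \<longrightarrow> int M < cf_q \<alpha> k \<longrightarrow>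
      10 / (real_of_int (cf_q \<alpha> k))\<^sup>2 \<le> c \<longrightarrow> c < 1 \<longrightarrow>
      real_of_int (cf_q \<alpha> k) * dist_int (real_of_int (cf_q \<alpha> k) * \<alpha>) \<le> 1 - c \<longrightarrow>
      -1 < x \<longrightarrow>
      x \<le> 1 - real_of_int (cf_q \<alpha> k) * dist_int (real_of_int (cf_q \<alpha> k) * \<alpha>) / (1 - c) \<longrightarrow>
        - C * ln (4 / c) / ((1 - \<bar>x\<bar>)\<^sup>2 * (real_of_int (cf_a \<alpha> (k + 1)))\<^sup>2) \<le> B_fun \<alpha> k M x
        \<and> B_fun \<alpha> k M x \<le> C / ((real_of_int (cf_a \<alpha> (k + 1)))\<^sup>2 * real_of_int (cf_q \<alpha> k)))
   \<and>
   (\<exists>C>0. \<forall>\<alpha> N K b k M bb.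
      \<alpha> \<notin> \<rat> \<longrightarrow> ostrowski_expansion \<alpha> N K b \<longrightarrow>
      1 \<le> k \<longrightarrow> k \<le> K - 1 \<longrightarrow> int M < cf_q \<alpha> k \<longrightarrow> bb + 1 \<le> b k \<longrightarrow>
        B_fun \<alpha> k M (real bb * real_of_int (cf_q \<alpha> k) * dist_int (real_of_int (cf_q \<alpha> k) * \<alpha>)
                      + ostrowski_eps \<alpha> K b k)
          \<le> C / ((real_of_int (cf_a \<alpha> (k + 1)))\<^sup>2 * real_of_int (cf_q \<alpha> k)))"
proof (intro conjI)
  show "\<exists>C>0. \<forall>\<alpha> k M c x.
      \<alpha> \<notin> \<rat> \<longrightarrow> 1 \<le> k \<longrightarrow> int M < cf_q \<alpha> k \<longrightarrow>
      10 / (real_of_int (cf_q \<alpha> k))\<^sup>2 \<le> c \<longrightarrow> c < 1 \<longrightarrow>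
      real_of_int (cf_q \<alpha> k) * dist_int (real_of_int (cf_q \<alpha> k) * \<alpha>) \<le> 1 - c \<longrightarrow>
      -1 < x \<longrightarrow>
      x \<le> 1 - real_of_int (cf_q \<alpha> k) * dist_int (real_of_int (cf_q \<alpha> k) * \<alpha>) / (1 - c) \<longrightarrow>
        - C * ln (4 / c) / ((1 - \<bar>x\<bar>)\<^sup>2 * (real_of_int (cf_a \<alpha> (k + 1)))\<^sup>2) \<le> B_fun \<alpha> k M x
        \<and> B_fun \<alpha> k M x \<le> C / ((real_of_int (cf_a \<alpha> (k + 1)))\<^sup>2 * real_of_int (cf_q \<alpha> k))"
  proof (intro exI[of _ 800] conjI allI impI)
    fix \<alpha> k M c x
    assume A: "\<alpha> \<notin> \<rat>" and k: "1 \<le> k" and Mq: "int M < cf_q \<alpha> k"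
      and c10: "10 / (real_of_int (cf_q \<alpha> k))\<^sup>2 \<le> c" and c1: "c < 1"
      and x1: "-1 < x"
      and x2: "x \<le> 1 - real_of_int (cf_q \<alpha> k) * dist_int (real_of_int (cf_q \<alpha> k) * \<alpha>) / (1 - c)"
    have q0: "0 < real_of_int (cf_q \<alpha> k)" using cf_q_ge1[OF A, of k] by simp
    have "0 < 10 / (real_of_int (cf_q \<alpha> k))\<^sup>2" using q0 by simp
    then have c0: "0 < c" using c10 by linarith
    have x2': "x \<le> 1 - real_of_int (cf_q \<alpha> k) * cf_e \<alpha> k / (1 - c)" using x2 unfolding cf_dist[OF A k] .
    show "- 800 * ln (4 / c) / ((1 - \<bar>x\<bar>)\<^sup>2 * (real_of_int (cf_a \<alpha> (k + 1)))\<^sup>2) \<le> B_fun \<alpha> k M x"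
      by (rule B_lower[OF A k Mq c0 c1 x1 x2'])
    have "B_fun \<alpha> k M x \<le> 0"
      by (rule B_upper[OF A k Mq x1 hx_part1[OF A Mq c0 c1 x2']])
    moreover have "0 < 800 / ((real_of_int (cf_a \<alpha> (k + 1)))\<^sup>2 * real_of_int (cf_q \<alpha> k))"
      using cf_a_ge1[OF A, of k] q0 by simp
    ultimately show "B_fun \<alpha> k M x \<le> 800 / ((real_of_int (cf_a \<alpha> (k + 1)))\<^sup>2 * real_of_int (cf_q \<alpha> k))"
      by linarith
  qed simp
  show "\<exists>C>0. \<forall>\<alpha> N K b k M bb.
      \<alpha> \<notin> \<rat> \<longrightarrow> ostrowski_expansion \<alpha> N K b \<longrightarrow>
      1 \<le> k \<longrightarrow> k \<le> K - 1 \<longrightarrow> int M < cf_q \<alpha> k \<longrightarrow> bb + 1 \<le> b k \<longrightarrow>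
        B_fun \<alpha> k M (real bb * real_of_int (cf_q \<alpha> k) * dist_int (real_of_int (cf_q \<alpha> k) * \<alpha>)
                      + ostrowski_eps \<alpha> K b k)
          \<le> C / ((real_of_int (cf_a \<alpha> (k + 1)))\<^sup>2 * real_of_int (cf_q \<alpha> k))"
  proof (intro exI[of _ 1] conjI allI impI)
    fix \<alpha> N K b k M bb
    assume A: "\<alpha> \<notin> \<rat>" and O: "ostrowski_expansion \<alpha> N K b" and k: "1 \<le> k" "k \<le> K - 1"
      and Mq: "int M < cf_q \<alpha> k" and bb: "bb + 1 \<le> b k"
    have q0: "0 < real_of_int (cf_q \<alpha> k)" using cf_q_ge1[OF A, of k] by simp
    have "B_fun \<alpha> k M (real bb * real_of_int (cf_q \<alpha> k) * dist_int (real_of_int (cf_q \<alpha> k) * \<alpha>)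
                      + ostrowski_eps \<alpha> K b k) \<le> 0" by (rule part2[OF A O k Mq bb])
    moreover have "0 < 1 / ((real_of_int (cf_a \<alpha> (k + 1)))\<^sup>2 * real_of_int (cf_q \<alpha> k))"
      using cf_a_ge1[OF A, of k] q0 by simp
    ultimately show "B_fun \<alpha> k M (real bb * real_of_int (cf_q \<alpha> k) * dist_int (real_of_int (cf_q \<alpha> k) * \<alpha>)
                      + ostrowski_eps \<alpha> K b k) \<le> 1 / ((real_of_int (cf_a \<alpha> (k + 1)))\<^sup>2 * real_of_int (cf_q \<alpha> k))"
      by linarith
  qed simp
qed


end
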